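(* Let $\Sigma$ be a set of real $n\times n$ matrices and let $\|\cdot\|$ be a polyhedral seminorm on $\mathbb{R}^n$ that is nonincreasing for $\Sigma$. Let $\mathcal{B}=\{x\in\mathbb{R}^n:\|x\|\le 1\}$. If there is a left-infinite product $\dots A_{\sigma(2)}A_{\sigma(1)}$ of matrices from $\Sigma$ that does not contract $\|\cdot\|$, then there is a left-infinite product of matrices from $\Sigma$ that does not contract $\|\cdot\|$ and that is periodic with a period $p$ satisfying $p\le p^*=W(\mathcal{B})$.
   Context: A seminorm is polyhedral if its unit ball is a polyhedron (a set defined by finitely many linear inequalities). A seminorm $\|\cdot\|$ is nonincreasing for a matrix $A$ if $\|Ax\|\le\|x\|$ for all $x$, and nonincreasing for a set $\Sigma$ if it is so for every matrix of $\Sigma$. Given a sequence $\sigma$ of indices, the left-infinite product $\dots A_{\sigma(2)}A_{\sigma(1)}$ contracts $\|\cdot\|$ if there is $t$ with $A_{\sigma(t)}\cdots A_{\sigma(1)}\mathcal{B}\subset \mathrm{int}(\mathcal{B})$ (interior in $\mathbb{R}^n$); it is periodic with period $p$ if $\sigma(i+p)=\sigma(i)$ for all $i$. Faces: for a polyhedron $\mathcal{Q}$, a face is $\mathcal{Q}$, $\varnothing$, or a set $\mathcal{Q}\cap\{x:b^\top x=c\}$ that is nonempty, where $b^\top x\le c$ for all $x\in\mathcal{Q}$; its dimension is $d$ if its affine hull has dimension $d$. A proper face is a face other than $\mathcal{Q}$ and $\varnothing$. For a centrally symmetric polyhedron $\mathcal{Q}=-\mathcal{Q}$, a double-face is a set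 $F\cup -F$ with $F$ a proper face (its rank is the dimension of $F$). The lattice of double-faces of $\mathcal{Q}$ is the set consisting of all double-faces of $\mathcal{Q}$ together with $\mathcal{Q}$ and $\varnothing$, partially ordered by inclusion. An antichain is a set of pairwise incomparable elements, and $W(\mathcal{Q})$, the width, is the maximum number of elements of an antichain in the lattice of double-faces of $\mathcal{Q}$. (The unit ball $\mathcal{B}$ of a seminorm is centrally symmetric.) *)

theory Defs
  imports "HOL-Analysis.Analysis"
begin

definition is_seminorm :: "(real^'n \<Rightarrow> real) \<Rightarrow> bool" where
  "is_seminorm N \<longleftrightarrow>
     (\<forall>x y. N (x + y) \<le> N x + N y) \<and> (\<forall>c x. N (c *\<^sub>R x) = \<bar>c\<bar> * N x)"

definition unit_ball :: "(real^'n \<Rightarrow> real) \<Rightarrow> (real^'n) set" where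
  "unit_ball N = {x. N x \<le> 1}"

definition polyhedral_seminorm :: "(real^'n \<Rightarrow> real) \<Rightarrow> bool" where
  "polyhedral_seminorm N \<longleftrightarrow> is_seminorm N \<and> polyhedron (unit_ball N)"

definition nonincreasing_for :: "(real^'n \<Rightarrow> real) \<Rightarrow> (real^'n^'n) set \<Rightarrow> bool" where
  "nonincreasing_for N \<Sigma> \<longleftrightarrow> (\<forall>A\<in>\<Sigma>. \<forall>x. N (A *v x) \<le> N x)"

text \<open>Partial products of a left-infinite product: lprod M t = M (t-1) ** ... ** M 0.
  (The paper's A_sigma(i) corresponds to M (i - 1).)\<close>
fun lprod :: "(nat \<Rightarrow> real^'n^'n) \<Rightarrow> nat \<Rightarrow> real^'n^'n" where
  "lprod M 0 = mat 1"
| "lprod M (Suc t) = M t ** lprod M t"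

definition contracts :: "(nat \<Rightarrow> real^'n^'n) \<Rightarrow> (real^'n \<Rightarrow> real) \<Rightarrow> bool" where
  "contracts M N \<longleftrightarrow>
     (\<exists>t\<ge>1. (\<lambda>x. lprod M t *v x) ` unit_ball N \<subseteq> interior (unit_ball N))"

definition periodic_with :: "(nat \<Rightarrow> 'a) \<Rightarrow> nat \<Rightarrow> bool" where
  "periodic_with M p \<longleftrightarrow> (\<forall>i. M (i + p) = M i)"

definition poly_face :: "(real^'n) set \<Rightarrow> (real^'n) set \<Rightarrow> bool" where
  "poly_face Q F \<longleftrightarrow> F = Q \<or> F = {} \<or>
     (\<exists>b c. (\<forall>x\<in>Q. b \<bullet> x \<le> c) \<and> F = Q \<inter> {x. b \<bullet> x = c} \<and> F \<noteq> {})"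

definition proper_face :: "(real^'n) set \<Rightarrow> (real^'n) set \<Rightarrow> bool" where
  "proper_face Q F \<longleftrightarrow> poly_face Q F \<and> F \<noteq> Q \<and> F \<noteq> {}"

definition double_faces :: "(real^'n) set \<Rightarrow> (real^'n) set set" where
  "double_faces Q = {F \<union> uminus ` F | F. proper_face Q F}"

definition double_face_lattice :: "(real^'n) set \<Rightarrow> (real^'n) set set" where
  "double_face_lattice Q = double_faces Q \<union> {Q, {}}"

definition antichain_sets :: "'a set set \<Rightarrow> bool" where
  "antichain_sets A \<longleftrightarrow> (\<forall>X\<in>A. \<forall>Y\<in>A. X \<noteq> Y \<longrightarrow> \<not> X \<subseteq> Y)"

text \<open>Width: maximum size of an antichain (the lattice is finite for polyhedra).\<close>
definition width :: "(real^'n) set \<Rightarrow> nat" where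
  "width Q = Max {card A | A. A \<subseteq> double_face_lattice Q \<and> finite A \<and> antichain_sets A}"

end

theory Submission
  imports Defs
begin


lemma sn_zero: "is_seminorm N \<Longrightarrow> N 0 = 0"
  unfolding is_seminorm_def by (metis abs_zero mult_zero_left scaleR_zero_left)

lemma sn_minus: "is_seminorm N \<Longrightarrow> N (- x) = N x"
  unfolding is_seminorm_def by (metis abs_minus_cancel abs_one mult_1 scaleR_minus1_left)

lemma sn_scale: "is_seminorm N \<Longrightarrow> N (c *\<^sub>R x) = \<bar>c\<bar> * N x"
  unfolding is_seminorm_def by blast

lemma sn_nonneg: "is_seminorm N \<Longrightarrow> N x \<ge> 0"
proof -
  assume s: "is_seminorm N"
  have "N (x + - x) \<le> N x + N (-x)" using s unfolding is_seminorm_def by blast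
  then show ?thesis using sn_zero[OF s] sn_minus[OF s, of x] by simp
qed

lemma sn_convex: "is_seminorm N \<Longrightarrow> convex_on UNIV N"
  unfolding convex_on_def
proof (intro conjI convex_UNIV ballI allI impI)
  fix u v :: real and x y assume s: "is_seminorm N" and t: "0 \<le> u" "0 \<le> v"
  have "N (u *\<^sub>R x + v *\<^sub>R y) \<le> N (u *\<^sub>R x) + N (v *\<^sub>R y)"
    using s unfolding is_seminorm_def by blast
  also have "\<dots> = u * N x + v * N y" using sn_scale[OF s] t by simp
  finally show "N (u *\<^sub>R x + v *\<^sub>R y) \<le> u * N x + v * N y" .
qed

lemma sn_cont: "is_seminorm N \<Longrightarrow> continuous_on UNIV N"
  by (rule convex_on_continuous) (auto intro: sn_convex)

lemma sn_open_interior: "is_seminorm N \<Longrightarrow> N x < 1 \<Longrightarrow> x \<in> interior (unit_ball N)"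
proof -
  assume s: "is_seminorm N" and x: "N x < 1"
  have "open {z. N z < 1}"
    by (rule open_Collect_less[OF sn_cont[OF s]]) (rule continuous_on_const)
  moreover have "{z. N z < 1} \<subseteq> unit_ball N" by (auto simp: unit_ball_def)
  ultimately show ?thesis using x interior_maximal by blast
qed

lemma sn_not_interior:
  assumes s: "is_seminorm N" and x: "N x = 1"
  shows "x \<notin> interior (unit_ball N)"
proof
  assume "x \<in> interior (unit_ball N)"
  then obtain e where e: "e > 0" "ball x e \<subseteq> unit_ball N" by (meson mem_interior)
  have x0: "x \<noteq> 0" using x sn_zero[OF s] by auto
  define d where "d = e / (2 * norm x)"
  have d: "d > 0" using e x0 by (simp add: d_def)
  have "dist x ((1 + d) *\<^sub>R x) = d * norm x"
    using d by (simp add: dist_norm algebra_simps)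
  also have "\<dots> = e / 2" using x0 by (simp add: d_def)
  finally have "(1 + d) *\<^sub>R x \<in> ball x e" using e by simp
  then have "N ((1 + d) *\<^sub>R x) \<le> 1" using e by (auto simp: unit_ball_def)
  then show False using sn_scale[OF s] x d by simp
qed


lemma polyhedron_halfspaces:
  fixes S :: "(real^'n) set"
  assumes "polyhedron S"
  shows "\<exists>C. finite C \<and> S = {x. \<forall>p\<in>C. fst p \<bullet> x \<le> snd p}"
proof -
  obtain F where F: "finite F" "S = \<Inter>F" "\<forall>h\<in>F. \<exists>a b. a \<noteq> 0 \<and> h = {x. a \<bullet> x \<le> b}"
    using assms unfolding polyhedron_def by (elim exE conjE) (rule that)
  define g where "g h = (SOME p. h = {x. fst p \<bullet> x \<le> snd p})" for h :: "(real^'n) set"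
  have g: "h = {x. fst (g h) \<bullet> x \<le> snd (g h)}" if hF: "h \<in> F" for h
  proof -
    obtain a b where ab: "a \<noteq> 0 \<and> h = {x. a \<bullet> x \<le> b}" using bspec[OF F(3) hF] by (elim exE) (rule that)
    have "h = {x. fst (a,b) \<bullet> x \<le> snd (a,b)}" using ab by simp
    then have "\<exists>p. h = {x. fst p \<bullet> x \<le> snd p}" by (rule exI)
    then show ?thesis unfolding g_def by (rule someI_ex)
  qed
  have gm: "x \<in> h \<longleftrightarrow> fst (g h) \<bullet> x \<le> snd (g h)" if hF: "h \<in> F" for h x
  proof -
    have "x \<in> {x. fst (g h) \<bullet> x \<le> snd (g h)} \<longleftrightarrow> fst (g h) \<bullet> x \<le> snd (g h)" by simp
    then show ?thesis using g[OF hF] by metis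
  qed
  have "S = {x. \<forall>p\<in>g ` F. fst p \<bullet> x \<le> snd p}"
  proof (intro set_eqI iffI)
    fix x assume "x \<in> S"
    then have "x \<in> h" if "h \<in> F" for h using F(2) that by blast
    then have "fst (g h) \<bullet> x \<le> snd (g h)" if "h \<in> F" for h using gm that by blast
    then show "x \<in> {x. \<forall>p\<in>g ` F. fst p \<bullet> x \<le> snd p}" by blast
  next
    fix x assume "x \<in> {x. \<forall>p\<in>g ` F. fst p \<bullet> x \<le> snd p}"
    then have "fst (g h) \<bullet> x \<le> snd (g h)" if "h \<in> F" for h using that by blast
    then have "x \<in> h" if "h \<in> F" for h using gm that by blast
    then show "x \<in> S" using F(2) by blast
  qed
  then show ?thesis using F(1) by blast
qed

lemma perturb:
  fixes C :: "((real^'n) \<times> real) set"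
  assumes "finite C" "\<forall>p\<in>C. fst p \<bullet> y \<le> snd p"
    "\<forall>p\<in>C. fst p \<bullet> y = snd p \<longrightarrow> fst p \<bullet> v \<le> 0"
  shows "\<exists>e>0. \<forall>p\<in>C. fst p \<bullet> (y + e *\<^sub>R v) \<le> snd p"
proof -
  have "\<forall>p\<in>C. eventually (\<lambda>e::real. fst p \<bullet> (y + e *\<^sub>R v) \<le> snd p) (at_right 0)"
  proof
    fix p assume p: "p \<in> C"
    show "eventually (\<lambda>e::real. fst p \<bullet> (y + e *\<^sub>R v) \<le> snd p) (at_right 0)"
    proof (cases "fst p \<bullet> y = snd p")
      case True
      then have "fst p \<bullet> v \<le> 0" using assms(3) p by blast
      show ?thesis
        by (rule eventually_mono[OF eventually_at_right_less[of "0::real"]])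
           (use True \<open>fst p \<bullet> v \<le> 0\<close> in \<open>simp add: inner_add_right mult_nonneg_nonpos\<close>)
    next
      case False
      then have lt: "fst p \<bullet> y < snd p" using assms(2) p by force
      have "((\<lambda>e::real. fst p \<bullet> y + e * (fst p \<bullet> v)) \<longlongrightarrow> fst p \<bullet> y + 0 * (fst p \<bullet> v)) (at_right 0)"
        by (intro tendsto_intros)
      then have "eventually (\<lambda>e::real. fst p \<bullet> y + e * (fst p \<bullet> v) < snd p) (at_right 0)"
        using lt by (intro order_tendstoD(2)) auto
      then show ?thesis by eventually_elim (simp add: inner_add_right)
    qed
  qed
  then have "eventually (\<lambda>e::real. \<forall>p\<in>C. fst p \<bullet> (y + e *\<^sub>R v) \<le> snd p) (at_right 0)"
    using assms(1) by (rule eventually_ball_finite[rotated])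
  then have "eventually (\<lambda>e::real. e > 0 \<and> (\<forall>p\<in>C. fst p \<bullet> (y + e *\<^sub>R v) \<le> snd p)) (at_right 0)"
    using eventually_at_right_less[of "0::real"] by eventually_elim auto
  then show ?thesis using eventually_happens'[OF trivial_limit_at_right_real] by blast
qed

locale ps =
  fixes N :: "real^'n \<Rightarrow> real" and C :: "((real^'n) \<times> real) set"
  assumes sn: "is_seminorm N" and finC: "finite C"
    and rep: "\<And>x. N x \<le> 1 \<longleftrightarrow> (\<forall>p\<in>C. fst p \<bullet> x \<le> snd p)"
begin

definition F :: "real^'n \<Rightarrow> (real^'n) set" where
  "F y = {x. N x \<le> 1 \<and> (\<forall>p\<in>C. fst p \<bullet> y = snd p \<longrightarrow> fst p \<bullet> x = snd p)}"

lemma active_pos: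
  assumes y: "N y = 1"
  shows "\<exists>p\<in>C. fst p \<bullet> y = snd p \<and> snd p > 0"
proof (rule ccontr)
  assume "\<not> ?thesis"
  then have a: "\<forall>p\<in>C. fst p \<bullet> y = snd p \<longrightarrow> fst p \<bullet> y \<le> 0" by force
  obtain e where e: "e > 0" "\<forall>p\<in>C. fst p \<bullet> (y + e *\<^sub>R y) \<le> snd p"
    using perturb[OF finC _ a] rep[of y] y by auto
  then have "N ((1 + e) *\<^sub>R y) \<le> 1" using rep by (simp add: algebra_simps)
  then show False using sn_scale[OF sn] y e by simp
qed

lemma F_N1:
  assumes y: "N y = 1" and z: "z \<in> F y"
  shows "N z = 1"
proof (rule ccontr)
  assume nz: "N z \<noteq> 1"
  obtain p where p: "p \<in> C" "fst p \<bullet> y = snd p" "snd p > 0" using active_pos[OF y] by blast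
  have z1: "N z < 1" and az: "fst p \<bullet> z = snd p" using z nz p unfolding F_def by auto
  have z0: "N z \<ge> 0" by (rule sn_nonneg[OF sn])
  define s where "s = 2 / (1 + N z)"
  have s1: "s > 1" using z1 z0 by (simp add: s_def field_simps)
  have "N (s *\<^sub>R z) = s * N z" using sn_scale[OF sn] s1 by simp
  also have "\<dots> < 1" using z1 z0 by (simp add: s_def field_simps)
  finally have "N (s *\<^sub>R z) \<le> 1" by simp
  then have "fst p \<bullet> (s *\<^sub>R z) \<le> snd p" using rep p(1) by blast
  then show False using az s1 p(3) by simp
qed

lemma F_proper:
  assumes y: "N y = 1"
  shows "proper_face (unit_ball N) (F y)"
proof -
  define I where "I = {p\<in>C. fst p \<bullet> y = snd p}"
  have finI: "finite I" using finC unfolding I_def by simp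
  define b where "b = (\<Sum>p\<in>I. fst p)"
  define c where "c = (\<Sum>p\<in>I. snd p)"
  have bx: "b \<bullet> x = (\<Sum>p\<in>I. fst p \<bullet> x)" for x unfolding b_def by (simp add: inner_sum_left)
  have le: "\<forall>x\<in>unit_ball N. b \<bullet> x \<le> c"
  proof
    fix x assume "x \<in> unit_ball N"
    then have "\<forall>p\<in>I. fst p \<bullet> x \<le> snd p" using rep[of x] unfolding unit_ball_def I_def by auto
    then show "b \<bullet> x \<le> c" unfolding bx c_def by (intro sum_mono) auto
  qed
  have eq: "F y = unit_ball N \<inter> {x. b \<bullet> x = c}"
  proof (intro set_eqI iffI)
    fix x assume x: "x \<in> F y"
    then have "\<forall>p\<in>I. fst p \<bullet> x = snd p" unfolding F_def I_def by auto
    then have "b \<bullet> x = c" unfolding bx c_def by (metis (mono_tags, lifting) sum.cong)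
    then show "x \<in> unit_ball N \<inter> {x. b \<bullet> x = c}" using x unfolding F_def unit_ball_def by auto
  next
    fix x assume x: "x \<in> unit_ball N \<inter> {x. b \<bullet> x = c}"
    then have le': "\<forall>p\<in>I. fst p \<bullet> x \<le> snd p" using rep[of x] unfolding unit_ball_def I_def by auto
    have "\<forall>p\<in>I. fst p \<bullet> x = snd p"
    proof (rule ccontr)
      assume "\<not> (\<forall>p\<in>I. fst p \<bullet> x = snd p)"
      then obtain q where q: "q \<in> I" "fst q \<bullet> x < snd q" using le' by force
      have "(\<Sum>p\<in>I. fst p \<bullet> x) < (\<Sum>p\<in>I. snd p)"
        by (rule sum_strict_mono_ex1[OF finI]) (use le' q in auto)
      then show False using x unfolding bx c_def by simp
    qed
    then show "x \<in> F y" using x unfolding F_def I_def unit_ball_def by auto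
  qed
  have yF: "y \<in> F y" using y unfolding F_def by simp
  have "0 \<notin> F y" using F_N1[OF y] sn_zero[OF sn] by force
  moreover have "0 \<in> unit_ball N" using sn_zero[OF sn] unfolding unit_ball_def by simp
  ultimately have ne: "F y \<noteq> unit_ball N" by blast
  have "poly_face (unit_ball N) (F y)" unfolding poly_face_def
    using le eq yF by blast
  then show ?thesis unfolding proper_face_def using ne yF by blast
qed

lemma F_edge:
  assumes y: "N y = 1" and A: "\<forall>x. N (A *v x) \<le> N x" and Ay: "N (A *v y) = 1"
    and z: "z \<in> F y"
  shows "A *v z \<in> F (A *v y)"
proof -
  have act: "\<forall>p\<in>C. fst p \<bullet> y = snd p \<longrightarrow> fst p \<bullet> (y - z) \<le> 0"
    using z unfolding F_def by (auto simp: inner_diff_right)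
  obtain e where e: "e > 0" "\<forall>p\<in>C. fst p \<bullet> (y + e *\<^sub>R (y - z)) \<le> snd p"
    using perturb[OF finC _ act] rep[of y] y by auto
  define w where "w = y + e *\<^sub>R (y - z)"
  have wB: "N w \<le> 1" using e rep unfolding w_def by blast
  have zB: "N z \<le> 1" using z unfolding F_def by simp
  have Aw: "N (A *v w) \<le> 1" using A wB order_trans by blast
  have Az: "N (A *v z) \<le> 1" using A zB order_trans by blast
  have yw: "(1 + e) *\<^sub>R y = w + e *\<^sub>R z" unfolding w_def by (simp add: algebra_simps)
  have "fst p \<bullet> (A *v z) = snd p" if p: "p \<in> C" "fst p \<bullet> (A *v y) = snd p" for p
  proof -
    have "(1 + e) * (fst p \<bullet> (A *v y)) = fst p \<bullet> (A *v ((1 + e) *\<^sub>R y))"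
      by (simp add: matrix_vector_mult_scaleR)
    also have "\<dots> = fst p \<bullet> (A *v w) + e * (fst p \<bullet> (A *v z))"
      unfolding yw by (simp add: matrix_vector_right_distrib matrix_vector_mult_scaleR inner_add_right)
    finally have eq: "(1 + e) * snd p = fst p \<bullet> (A *v w) + e * (fst p \<bullet> (A *v z))" using p by simp
    have "fst p \<bullet> (A *v w) \<le> snd p" using rep Aw p by blast
    moreover have "fst p \<bullet> (A *v z) \<le> snd p" using rep Az p by blast
    moreover have "(1 + e) * snd p = snd p + e * snd p" by (simp add: algebra_simps)
    ultimately have "e * snd p \<le> e * (fst p \<bullet> (A *v z))" using eq by linarith
    then have "snd p \<le> fst p \<bullet> (A *v z)" using e(1) by simp
    then show ?thesis using \<open>fst p \<bullet> (A *v z) \<le> snd p\<close> by simp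
  qed
  then show ?thesis using Az unfolding F_def by blast
qed

end



definition cyc :: "(real^'n^'n) set \<Rightarrow> (real^'n) set set \<Rightarrow> nat \<Rightarrow> (nat \<Rightarrow> (real^'n) set) \<Rightarrow> (nat \<Rightarrow> real^'n^'n) \<Rightarrow> bool" where
  "cyc \<Sigma> V m g A \<longleftrightarrow> 1 \<le> m \<and> (\<forall>k<m. A k \<in> \<Sigma> \<and> g k \<in> V \<and> (\<lambda>x. A k *v x) ` g k \<subseteq> g (Suc k)) \<and> g m \<subseteq> g 0"

lemma cyc_min:
  "cyc \<Sigma> V m g A \<Longrightarrow> \<exists>m' g' A'. cyc \<Sigma> V m' g' A' \<and> (\<forall>i<m'. \<forall>j<m'. i \<noteq> j \<longrightarrow> \<not> g' i \<subseteq> g' j)"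
proof (induction m arbitrary: g A rule: less_induct)
  case (less m)
  show ?case
  proof (cases "\<forall>i<m. \<forall>j<m. i \<noteq> j \<longrightarrow> \<not> g i \<subseteq> g j")
    case True then show ?thesis using less.prems by blast
  next
    case False
    then obtain i j where ij: "i < m" "j < m" "i \<noteq> j" "g i \<subseteq> g j" by blast
    have c: "1 \<le> m" "\<And>k. k < m \<Longrightarrow> A k \<in> \<Sigma> \<and> g k \<in> V \<and> (\<lambda>x. A k *v x) ` g k \<subseteq> g (Suc k)"
      "g m \<subseteq> g 0" using less.prems unfolding cyc_def by auto
    show ?thesis
    proof (cases "j < i")
      case True
      define g' where "g' k = g (j + k)" for k
      define A' where "A' k = A (j + k)" for k
      have "cyc \<Sigma> V (i - j) g' A'"
        unfolding cyc_def g'_def A'_def using True ij c(2)[of "j + _"] by auto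
      then show ?thesis using less.IH[of "i - j"] True ij by auto
    next
      case False
      then have ij': "i < j" using ij by simp
      define m' where "m' = m - (j - i)"
      define g' where "g' k = (if k \<le> i then g k else g (k + (j - i)))" for k
      define A' where "A' k = (if k < i then A k else A (k + (j - i)))" for k
      have "cyc \<Sigma> V m' g' A'"
        unfolding cyc_def
      proof (intro conjI allI impI)
        show "1 \<le> m'" using ij ij' unfolding m'_def by simp
        show "g' m' \<subseteq> g' 0" using ij ij' c(3) unfolding m'_def g'_def by simp
      next
        fix k assume k: "k < m'"
        have km: "k + (j - i) < m" using k ij ij' unfolding m'_def by simp
        show "A' k \<in> \<Sigma>" using c(2)[of k] c(2)[OF km] k ij unfolding A'_def m'_def by auto
        show "g' k \<in> V" using c(2)[of k] c(2)[OF km] k ij unfolding g'_def m'_def by auto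
        show "(\<lambda>x. A' k *v x) ` g' k \<subseteq> g' (Suc k)"
        proof (cases "k < i")
          case True then show ?thesis using c(2)[of k] ij unfolding g'_def A'_def by auto
        next
          case False
          show ?thesis
          proof (cases "k = i")
            case True
            have "(\<lambda>x. A j *v x) ` g i \<subseteq> (\<lambda>x. A j *v x) ` g j" using ij by blast
            also have "\<dots> \<subseteq> g (Suc j)" using c(2)[OF ij(2)] by blast
            finally show ?thesis using True ij' unfolding g'_def A'_def by simp
          next
            case False
            then have "k > i" using \<open>\<not> k < i\<close> by simp
            then show ?thesis using c(2)[OF km] unfolding g'_def A'_def by simp
          qed
        qed
      qed
      moreover have "m' < m" using ij ij' unfolding m'_def by simp
      ultimately show ?thesis using less.IH by blast
    qed
  qed
qed

lemma cyc_orbit: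
  assumes c: "cyc \<Sigma> V m g A" and x: "x \<in> g 0"
  shows "lprod (\<lambda>i. A (i mod m)) t *v x \<in> g (t mod m)"
proof (induction t)
  case 0 then show ?case using x by simp
next
  case (Suc t)
  have m: "m \<ge> 1" and st: "(\<lambda>x. A (t mod m) *v x) ` g (t mod m) \<subseteq> g (Suc (t mod m))" and gm: "g m \<subseteq> g 0"
    using c unfolding cyc_def by auto
  have "lprod (\<lambda>i. A (i mod m)) (Suc t) *v x = A (t mod m) *v (lprod (\<lambda>i. A (i mod m)) t *v x)"
    by (simp add: matrix_vector_mul_assoc)
  also have "\<dots> \<in> g (Suc (t mod m))" using Suc st by blast
  finally show ?case using gm by (auto simp: mod_Suc split: if_splits)
qed

lemma cyc_periodic:
  assumes c: "cyc \<Sigma> V m g A" and V: "\<forall>G\<in>V. G \<noteq> {} \<and> (\<forall>x\<in>G. N x = 1)" and s: "is_seminorm N"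
  shows "(\<forall>i. A (i mod m) \<in> \<Sigma>) \<and> \<not> contracts (\<lambda>i. A (i mod m)) N \<and> 1 \<le> m \<and> periodic_with (\<lambda>i. A (i mod m)) m"
proof -
  have m: "m \<ge> 1" and k: "\<And>k. k < m \<Longrightarrow> A k \<in> \<Sigma> \<and> g k \<in> V" using c unfolding cyc_def by auto
  have "g 0 \<in> V" using k m by simp
  then obtain x where x: "x \<in> g 0" using V by blast
  have x1: "N x = 1" using x V \<open>g 0 \<in> V\<close> by blast
  have "\<not> contracts (\<lambda>i. A (i mod m)) N"
    unfolding contracts_def
  proof clarify
    fix t :: nat assume "1 \<le> t" and sub: "(\<lambda>x. lprod (\<lambda>i. A (i mod m)) t *v x) ` unit_ball N \<subseteq> interior (unit_ball N)"
    have "x \<in> unit_ball N" using x1 by (simp add: unit_ball_def)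
    then have "lprod (\<lambda>i. A (i mod m)) t *v x \<in> interior (unit_ball N)" using sub by blast
    moreover have "t mod m < m" using m by simp
    then have "g (t mod m) \<in> V" using k by blast
    then have "N (lprod (\<lambda>i. A (i mod m)) t *v x) = 1" using cyc_orbit[OF c x] V by blast
    ultimately show False using sn_not_interior[OF s] by blast
  qed
  moreover have "\<forall>i. A (i mod m) \<in> \<Sigma>" using k m by simp
  moreover have "periodic_with (\<lambda>i. A (i mod m)) m" unfolding periodic_with_def by simp
  ultimately show ?thesis using m by blast
qed

lemma poly_face_face_of:
  assumes "polyhedron Q" "poly_face Q F" shows "F face_of Q"
proof -
  have cv: "convex Q" using assms(1) by (rule polyhedron_imp_convex)
  show ?thesis using assms(2) unfolding poly_face_def
  proof (elim disjE exE conjE)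
    assume "F = Q" then show ?thesis using cv by (simp add: face_of_refl)
  next
    assume "F = {}" then show ?thesis by simp
  next
    fix b c assume "\<forall>x\<in>Q. b \<bullet> x \<le> c" "F = Q \<inter> {x. b \<bullet> x = c}"
    then show ?thesis using face_of_Int_supporting_hyperplane_le[OF cv] by auto
  qed
qed

lemma finite_lattice:
  assumes "polyhedron Q" shows "finite (double_face_lattice Q)"
proof -
  have "double_faces Q \<subseteq> (\<lambda>F. F \<union> uminus ` F) ` {F. F face_of Q}"
    unfolding double_faces_def proper_face_def using poly_face_face_of[OF assms] by blast
  then have "finite (double_faces Q)"
    using finite_polyhedron_faces[OF assms] finite_subset by blast
  then show ?thesis unfolding double_face_lattice_def by simp
qed

lemma width_ge:
  assumes "finite (double_face_lattice Q)" "A \<subseteq> double_face_lattice Q" "antichain_sets A"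
  shows "card A \<le> width Q"
proof -
  have fA: "finite A" using assms(1,2) finite_subset by blast
  have "{card A | A. A \<subseteq> double_face_lattice Q \<and> finite A \<and> antichain_sets A} \<subseteq> card ` Pow (double_face_lattice Q)"
    by blast
  then have "finite {card A | A. A \<subseteq> double_face_lattice Q \<and> finite A \<and> antichain_sets A}"
    using assms(1) finite_subset by blast
  then show ?thesis unfolding width_def using assms fA by (intro Max_ge) blast+
qed

lemma lprod_mono:
  assumes "nonincreasing_for N \<Sigma>" "\<forall>i. M i \<in> \<Sigma>"
  shows "N (lprod M (t + s) *v x) \<le> N (lprod M t *v x)"
proof (induction s)
  case 0 then show ?case by simp
next
  case (Suc s)
  have "lprod M (t + Suc s) *v x = M (t + s) *v (lprod M (t + s) *v x)"
    by (simp add: matrix_vector_mul_assoc)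
  moreover have "N (M (t + s) *v (lprod M (t + s) *v x)) \<le> N (lprod M (t + s) *v x)"
    using assms unfolding nonincreasing_for_def by blast
  ultimately show ?case using Suc by simp
qed



lemma mv_neg: "(A::real^'n^'n) *v (- z) = - (A *v z)"
  by (metis matrix_vector_mult_scaleR scaleR_minus1_left)

theorem theorem1:
  fixes \<Sigma> :: "(real^'n^'n) set" and N :: "real^'n \<Rightarrow> real"
    and M :: "nat \<Rightarrow> real^'n^'n"
  assumes "polyhedral_seminorm N"
    and "nonincreasing_for N \<Sigma>"
    and "\<forall>i. M i \<in> \<Sigma>"
    and "\<not> contracts M N"
  shows "\<exists>M' p. (\<forall>i. M' i \<in> \<Sigma>) \<and> \<not> contracts M' N \<and> 1 \<le> p \<and>
           periodic_with M' p \<and> p \<le> width (unit_ball N)"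
proof -
  have sn: "is_seminorm N" and ph: "polyhedron (unit_ball N)"
    using assms(1) unfolding polyhedral_seminorm_def by auto
  obtain C where C: "finite C" "unit_ball N = {x. \<forall>p\<in>C. fst p \<bullet> x \<le> snd p}"
    using polyhedron_halfspaces[OF ph] by blast
  have rep: "N x \<le> 1 \<longleftrightarrow> (\<forall>p\<in>C. fst p \<bullet> x \<le> snd p)" for x
  proof -
    have "x \<in> unit_ball N \<longleftrightarrow> x \<in> {x. \<forall>p\<in>C. fst p \<bullet> x \<le> snd p}" using C(2) by simp
    then show ?thesis unfolding unit_ball_def by simp
  qed
  interpret ps N C using sn C(1) rep by unfold_locales auto
  define D where "D y = F y \<union> uminus ` F y" for y
  define V where "V = {D y | y. N y = 1}"
  have VD: "V \<subseteq> double_faces (unit_ball N)"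
    unfolding V_def D_def double_faces_def using F_proper by blast
  have finV: "finite V"
    using VD finite_lattice[OF ph] finite_subset unfolding double_face_lattice_def by blast
  have V1: "\<forall>G\<in>V. G \<noteq> {} \<and> (\<forall>x\<in>G. N x = 1)"
  proof
    fix G assume "G \<in> V"
    then obtain y where y: "N y = 1" "G = D y" unfolding V_def by blast
    have "y \<in> F y" using y unfolding F_def by simp
    moreover have "\<forall>x\<in>G. N x = 1" using F_N1[OF y(1)] sn_minus[OF sn] unfolding y(2) D_def by auto
    ultimately show "G \<noteq> {} \<and> (\<forall>x\<in>G. N x = 1)" unfolding y(2) D_def by blast
  qed
  have Dedge: "(\<lambda>x. A *v x) ` D y \<subseteq> D (A *v y)"
    if y: "N y = 1" and A: "A \<in> \<Sigma>" and Ay: "N (A *v y) = 1" for y A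
  proof -
    have An: "\<forall>x. N (A *v x) \<le> N x" using assms(2) A unfolding nonincreasing_for_def by blast
    show ?thesis unfolding D_def using F_edge[OF y An Ay]
      by (auto simp: mv_neg)
  qed
  define T where "T = card V + 1"
  have "\<not> (\<lambda>x. lprod M T *v x) ` unit_ball N \<subseteq> interior (unit_ball N)"
  proof -
    have "T \<ge> 1" unfolding T_def by simp
    then show ?thesis using assms(4) unfolding contracts_def by blast
  qed
  then obtain x where x: "N x \<le> 1" "lprod M T *v x \<notin> interior (unit_ball N)"
    unfolding unit_ball_def by auto
  have NT: "N (lprod M T *v x) \<ge> 1" using x(2) sn_open_interior[OF sn] by force
  have Nt: "N (lprod M t *v x) = 1" if "t \<le> T" for t
  proof -
    have "N (lprod M (t + (T - t)) *v x) \<le> N (lprod M t *v x)" by (rule lprod_mono[OF assms(2,3)])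
    moreover have "N (lprod M t *v x) \<le> N (lprod M 0 *v x)" using lprod_mono[OF assms(2,3), of 0 t] by simp
    ultimately show ?thesis using NT x(1) that by simp
  qed
  define d where "d t = D (lprod M t *v x)" for t
  have dV: "d t \<in> V" if "t \<le> T" for t unfolding d_def V_def using Nt[OF that] by blast
  have dstep: "(\<lambda>z. M t *v z) ` d t \<subseteq> d (Suc t)" if "t < T" for t
  proof -
    have "lprod M (Suc t) *v x = M t *v (lprod M t *v x)" by (simp add: matrix_vector_mul_assoc)
    then show ?thesis unfolding d_def using Dedge[of "lprod M t *v x" "M t"] Nt[of t] Nt[of "Suc t"] that assms(3)
      by simp
  qed
  have "\<not> inj_on d {..T}"
  proof
    assume "inj_on d {..T}"
    then have "card (d ` {..T}) = T + 1" by (simp add: card_image)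
    moreover have "d ` {..T} \<subseteq> V" using dV by auto
    ultimately have "T + 1 \<le> card V" using card_mono[OF finV] by metis
    then show False unfolding T_def by simp
  qed
  then obtain i j where ij: "i \<le> T" "j \<le> T" "i \<noteq> j" "d i = d j" unfolding inj_on_def by auto
  obtain a b where ab: "a < b" "b \<le> T" "d a = d b"
  proof (cases "i < j")
    case True then show ?thesis using that ij by blast
  next
    case False then show ?thesis using that[of j i] ij by auto
  qed
  have "cyc \<Sigma> V (b - a) (\<lambda>k. d (a + k)) (\<lambda>k. M (a + k))"
    unfolding cyc_def using ab dV dstep assms(3) by auto
  then obtain m g A where c: "cyc \<Sigma> V m g A" and ac: "\<forall>i<m. \<forall>j<m. i \<noteq> j \<longrightarrow> \<not> g i \<subseteq> g j"
    using cyc_min by blast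
  have gV: "g k \<in> V" if "k < m" for k using c that unfolding cyc_def by blast
  have inj: "inj_on g {..<m}" using ac unfolding inj_on_def by blast
  have "antichain_sets (g ` {..<m})" using ac unfolding antichain_sets_def by blast
  moreover have "g ` {..<m} \<subseteq> double_face_lattice (unit_ball N)"
    using gV VD unfolding double_face_lattice_def by blast
  ultimately have "card (g ` {..<m}) \<le> width (unit_ball N)"
    using width_ge[OF finite_lattice[OF ph]] by blast
  then have mw: "m \<le> width (unit_ball N)" using card_image[OF inj] by simp
  show ?thesis using cyc_periodic[OF c V1 sn] mw by (intro exI[of _ "\<lambda>i. A (i mod m)"] exI[of _ m]) blast
qed

end
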